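(* Suppose Assumption 1 (context) holds. For ARDCA as in the context, every $k\ge0$ (every realization) and every $u\in\mathbb{D}$, $$-\sum_{i=1}^n\sigma_1(u_i,\tilde z_i^k)-\sigma_2(u,v^k)=\langle\triangle(x^*(v^k),ny^k),u\rangle+D(u)+f(x^*(v^k))+\frac1n\phi(ny^k),$$ where $\triangle(x,y)=[(A^Tx-y)^T/n,(Bx+b)^T,g_1(x),\dots,g_m(x)]^T$ for $x\in\mathbb{R}^t,y\in\mathbb{R}^n$, and $\phi(y)=\sum_{i=1}^n\phi_i(y_i)$.
   Context: Data: integers $n,t\ge1$, $p,m\ge0$; $A\in\mathbb{R}^{t\times n}$ (columns $A_j$), $B\in\mathbb{R}^{p\times t}$ (rows $B_{j,:}$), $b\in\mathbb{R}^p$; $f:\mathbb{R}^t\to\mathbb{R}$, $\phi_i:\mathbb{R}\to\mathbb{R}$, $g_i:\mathbb{R}^t\to\mathbb{R}$. Primal problem: minimize $f(x)+\frac1n\sum_i\phi_i(A_i^Tx)$ s.t. $Bx+b=0$, $g_i(x)\le0$. Assumption 1: $f$ $\mu$-strongly convex ($\mu>0$); $\phi_i$ convex and $M$-Lipschitz; $g_i$ convex with subgradients of norm $\le L_{g_i}$; a Slater point $\bar x$ ($g_i(\bar x)<0$, $B\bar x+b=0$) exists; the optimal value is finite. Dual: $\widehat n=n+p+m$, $\mathbb{D}=\{u:u_{n+p+1},\dots,u_{\widehat n}\ge0\}$, $L_f(x,u)=f(x)+\langle u_{1:n},A^Tx/n\rangle+\langle u_{n+1:n+p},Bx+b\rangle+\sum_iu_{n+p+i}g_i(x)$,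 $x^*(u)=\arg\min_xL_f(x,u)$, $d(u)=-L_f(x^*(u),u)$ with $\nabla d(u)=-[(A^Tx^*(u)/n)^T,(Bx^*(u)+b)^T,g(x^*(u))^T]^T$ on $\mathbb{D}$; $h_i=\frac1n\phi_i^*$ ($i\le n$, $\phi_i^*$ the convex conjugate), $h_i\equiv0$ ($n<i\le n+p$), $h_i$ = indicator of $[0,\infty)$ ($i>n+p$); $D(u)=d(u)+\sum_ih_i(u_i)$. $L_j=\|A_j\|^2/(n^2\mu)$ ($j\le n$), $\|B_{j-n,:}\|^2/\mu$ ($n<j\le n+p$), $L_{g_{j-n-p}}^2/\mu$ ($j>n+p$). ARDCA: $\theta_0=1/\widehat n$, $\theta_{k+1}=\frac{\sqrt{\theta_k^4+4\theta_k^2}-\theta_k^2}{2}$; $z^0=u^0\in\mathbb{D}$; for $k\ge0$: $v^k=\theta_kz^k+(1-\theta_k)u^k$; for every $i$, $\tilde z_i^k=\arg\min_{w\in\mathbb{R}}\widehat n\theta_kL_i(w-z_i^k)^2+\nabla_id(v^k)(w-z_i^k)+h_i(w)$; $i_k$ uniform on $\{1,\dots,\widehat n\}$; $z^{k+1}_{i_k}=\tilde z^k_{i_k}$, $z^{k+1}_j=z^k_j$ ($j\ne i_k$); $u^{k+1}=v^k+\widehat n\theta_k(z^{k+1}-z^k)$. Auxiliary quantities: $y_i^k=-2\widehat n\theta_kL_i(\tilde z_i^k-z_i^k)-\nabla_id(v^k)$ for $1\le i\le n$, $y^k=(y^k_1,\dots,y^k_n)$; for $i\le n$, $\sigma_1(u_i,\tilde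 z_i^k)=h_i(\tilde z_i^k)+y_i^k(u_i-\tilde z_i^k)-h_i(u_i)$; $\sigma_2(u,v^k)=d(v^k)+\langle\nabla d(v^k),u-v^k\rangle-d(u)$. *)

theory Defs
  imports "HOL-Analysis.Analysis" "HOL-Library.Extended_Real"
begin

text \<open>Dual vectors u in R^nhat
  (nhat = n+p+m) are functions nat => real, of which only the entries 1..nhat matter.
  The columns of A are A 1, ..., A n; the rows of B are Bm 1, ..., Bm p.\<close>

definition strongly_convex :: "real \<Rightarrow> ('a::real_normed_vector \<Rightarrow> real) \<Rightarrow> bool" where
  "strongly_convex \<mu> f \<longleftrightarrow> (\<forall>x y. \<forall>l::real. 0 \<le> l \<and> l \<le> 1 \<longrightarrow>
     f (l *\<^sub>R x + (1 - l) *\<^sub>R y) \<le> l * f x + (1 - l) * f y - \<mu> / 2 * l * (1 - l) * (norm (x - y))\<^sup>2)"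

definition is_subgrad :: "('a::real_inner \<Rightarrow> real) \<Rightarrow> 'a \<Rightarrow> 'a \<Rightarrow> bool" where
  "is_subgrad g x s \<longleftrightarrow> (\<forall>y. g x + inner s (y - x) \<le> g y)"

definition conj_fun :: "(real \<Rightarrow> real) \<Rightarrow> real \<Rightarrow> ereal" where
  "conj_fun \<phi> s = (SUP y. ereal (s * y - \<phi> y))"

definition dual_dom :: "nat \<Rightarrow> nat \<Rightarrow> nat \<Rightarrow> (nat \<Rightarrow> real) set" where
  "dual_dom n p m = {u. \<forall>i \<in> {n+p+1..n+p+m}. 0 \<le> u i}"

definition lagr :: "nat \<Rightarrow> nat \<Rightarrow> nat \<Rightarrow> (nat \<Rightarrow> real^'t::finite) \<Rightarrow> (nat \<Rightarrow> real^'t) \<Rightarrow> (nat \<Rightarrow> real)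
    \<Rightarrow> (real^'t \<Rightarrow> real) \<Rightarrow> (nat \<Rightarrow> real^'t \<Rightarrow> real) \<Rightarrow> real^'t \<Rightarrow> (nat \<Rightarrow> real) \<Rightarrow> real" where
  "lagr n p m A Bm b f g x u =
     f x + (\<Sum>i=1..n. u i * (inner (A i) x / real n))
         + (\<Sum>j=1..p. u (n+j) * (inner (Bm j) x + b j))
         + (\<Sum>i=1..m. u (n+p+i) * g i x)"

text \<open>x^*(u) = argmin_x L_f(x,u) (unique on \<D> under Assumption 1).\<close>
definition xstar :: "nat \<Rightarrow> nat \<Rightarrow> nat \<Rightarrow> (nat \<Rightarrow> real^'t::finite) \<Rightarrow> (nat \<Rightarrow> real^'t) \<Rightarrow> (nat \<Rightarrow> real)
    \<Rightarrow> (real^'t \<Rightarrow> real) \<Rightarrow> (nat \<Rightarrow> real^'t \<Rightarrow> real) \<Rightarrow> (nat \<Rightarrow> real) \<Rightarrow> real^'t" where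
  "xstar n p m A Bm b f g u =
     (THE x. \<forall>y. lagr n p m A Bm b f g x u \<le> lagr n p m A Bm b f g y u)"

definition dual_d :: "nat \<Rightarrow> nat \<Rightarrow> nat \<Rightarrow> (nat \<Rightarrow> real^'t::finite) \<Rightarrow> (nat \<Rightarrow> real^'t) \<Rightarrow> (nat \<Rightarrow> real)
    \<Rightarrow> (real^'t \<Rightarrow> real) \<Rightarrow> (nat \<Rightarrow> real^'t \<Rightarrow> real) \<Rightarrow> (nat \<Rightarrow> real) \<Rightarrow> real" where
  "dual_d n p m A Bm b f g u =
     - lagr n p m A Bm b f g (xstar n p m A Bm b f g u) u"

definition cmap :: "nat \<Rightarrow> nat \<Rightarrow> (nat \<Rightarrow> real^'t::finite) \<Rightarrow> (nat \<Rightarrow> real^'t) \<Rightarrow> (nat \<Rightarrow> real)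
    \<Rightarrow> (nat \<Rightarrow> real^'t \<Rightarrow> real) \<Rightarrow> real^'t \<Rightarrow> nat \<Rightarrow> real" where
  "cmap n p A Bm b g x i =
     (if i \<le> n then inner (A i) x / real n
      else if i \<le> n + p then inner (Bm (i - n)) x + b (i - n)
      else g (i - n - p) x)"

text \<open>The gradient of d on \<D>, given by the formula of the paper:
  grad d(u) = -[A^T x^*(u)/n; B x^*(u) + b; g(x^*(u))].\<close>
definition grad_d :: "nat \<Rightarrow> nat \<Rightarrow> nat \<Rightarrow> (nat \<Rightarrow> real^'t::finite) \<Rightarrow> (nat \<Rightarrow> real^'t) \<Rightarrow> (nat \<Rightarrow> real)
    \<Rightarrow> (real^'t \<Rightarrow> real) \<Rightarrow> (nat \<Rightarrow> real^'t \<Rightarrow> real) \<Rightarrow> (nat \<Rightarrow> real) \<Rightarrow> nat \<Rightarrow> real" where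
  "grad_d n p m A Bm b f g u i = - cmap n p A Bm b g (xstar n p m A Bm b f g u) i"

definition hfun :: "nat \<Rightarrow> nat \<Rightarrow> (nat \<Rightarrow> real \<Rightarrow> real) \<Rightarrow> nat \<Rightarrow> real \<Rightarrow> ereal" where
  "hfun n p \<phi> i w =
     (if i \<le> n then conj_fun (\<phi> i) w / ereal (real n)
      else if i \<le> n + p then 0
      else if 0 \<le> w then 0 else \<infinity>)"

definition dual_D :: "nat \<Rightarrow> nat \<Rightarrow> nat \<Rightarrow> (nat \<Rightarrow> real^'t::finite) \<Rightarrow> (nat \<Rightarrow> real^'t) \<Rightarrow> (nat \<Rightarrow> real)
    \<Rightarrow> (real^'t \<Rightarrow> real) \<Rightarrow> (nat \<Rightarrow> real \<Rightarrow> real) \<Rightarrow> (nat \<Rightarrow> real^'t \<Rightarrow> real) \<Rightarrow> (nat \<Rightarrow> real) \<Rightarrow> ereal" where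
  "dual_D n p m A Bm b f \<phi> g u =
     ereal (dual_d n p m A Bm b f g u) + (\<Sum>i=1..n+p+m. hfun n p \<phi> i (u i))"

definition Lconst :: "nat \<Rightarrow> nat \<Rightarrow> real \<Rightarrow> (nat \<Rightarrow> real^'t::finite) \<Rightarrow> (nat \<Rightarrow> real^'t) \<Rightarrow> (nat \<Rightarrow> real) \<Rightarrow> nat \<Rightarrow> real" where
  "Lconst n p \<mu> A Bm Lg j =
     (if j \<le> n then (norm (A j))\<^sup>2 / ((real n)\<^sup>2 * \<mu>)
      else if j \<le> n + p then (norm (Bm (j - n)))\<^sup>2 / \<mu>
      else (Lg (j - n - p))\<^sup>2 / \<mu>)"

fun ardca_theta :: "nat \<Rightarrow> nat \<Rightarrow> real" where
  "ardca_theta N 0 = 1 / real N"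
| "ardca_theta N (Suc k) =
     (let th = ardca_theta N k in (sqrt (th ^ 4 + 4 * th\<^sup>2) - th\<^sup>2) / 2)"

text \<open>The triangle map \<triangle>(x,y) paired with u.\<close>
definition tri_inner :: "nat \<Rightarrow> nat \<Rightarrow> nat \<Rightarrow> (nat \<Rightarrow> real^'t::finite) \<Rightarrow> (nat \<Rightarrow> real^'t) \<Rightarrow> (nat \<Rightarrow> real)
    \<Rightarrow> (nat \<Rightarrow> real^'t \<Rightarrow> real) \<Rightarrow> real^'t \<Rightarrow> (nat \<Rightarrow> real) \<Rightarrow> (nat \<Rightarrow> real) \<Rightarrow> real" where
  "tri_inner n p m A Bm b g x y u =
     (\<Sum>i=1..n. (inner (A i) x - y i) / real n * u i)
     + (\<Sum>j=1..p. (inner (Bm j) x + b j) * u (n+j))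
     + (\<Sum>i=1..m. g i x * u (n+p+i))"

end

theory Submission
  imports Defs
begin



lemma subgrad_exists_real:
  fixes \<psi> :: "real \<Rightarrow> real"
  assumes cvx: "convex_on UNIV \<psi>"
  shows "\<exists>s. \<forall>w. \<psi> x + s * (w - x) \<le> \<psi> w"
proof -
  define S where "S = (\<lambda>t. (\<psi> x - \<psi> t) / (x - t)) ` {..<x}"
  have mid: "(\<psi> x - \<psi> t) / (x - t) \<le> (\<psi> r - \<psi> x) / (r - x)" if "t < x" "x < r" for t r
  proof -
    have "(\<psi> t - \<psi> r) / (t - r) \<le> (\<psi> x - \<psi> r) / (x - r)"
      using convex_on_slope_le(2)[OF cvx, of t r x] that by auto
    moreover have "(\<psi> t - \<psi> x) / (t - x) \<le> (\<psi> t - \<psi> r) / (t - r)"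
      using convex_on_slope_le(1)[OF cvx, of t r x] that by auto
    ultimately show ?thesis by (smt (verit) minus_divide_divide)
  qed
  have ne: "S \<noteq> {}" unfolding S_def by auto
  have bdd: "bdd_above S" unfolding S_def bdd_above_def
    using mid[of _ "x+1"] by auto
  define s where "s = Sup S"
  have "\<psi> x + s * (w - x) \<le> \<psi> w" for w
  proof (cases "w < x")
    case True
    have "(\<psi> x - \<psi> w) / (x - w) \<le> s" unfolding s_def
      using cSup_upper[OF _ bdd] True unfolding S_def by auto
    then have "\<psi> x - \<psi> w \<le> s * (x - w)" using True by (simp add: divide_le_eq)
    then show ?thesis by (simp add: algebra_simps)
  next
    case False
    show ?thesis
    proof (cases "w = x")
      case True then show ?thesis by simp
    next
      case False2: False
      with False have wx: "x < w" by simp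
      have "s \<le> (\<psi> w - \<psi> x) / (w - x)" unfolding s_def
        using cSup_least[OF ne] mid[OF _ wx] unfolding S_def by auto
      then have "s * (w - x) \<le> \<psi> w - \<psi> x" using wx by (simp add: le_divide_eq)
      then show ?thesis by simp
    qed
  qed
  then show ?thesis by blast
qed

lemma conj_lower: "ereal (s * y - \<phi> y) \<le> conj_fun \<phi> s"
  unfolding conj_fun_def by (rule SUP_upper) simp

lemma conj_upper: "(\<And>y. s * y - \<phi> y \<le> c) \<Longrightarrow> conj_fun \<phi> s \<le> ereal c"
  unfolding conj_fun_def by (rule SUP_least) simp

lemma limit_arg:
  fixes a b e :: real
  assumes "\<And>t. 0 < t \<Longrightarrow> t \<le> 1 \<Longrightarrow> b - t * e \<le> a"
  shows "b \<le> a"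
proof (rule ccontr)
  assume "\<not> b \<le> a"
  then have ba: "a < b" by simp
  define t where "t = min 1 ((b - a) / (2 * (\<bar>e\<bar> + 1)))"
  have t0: "0 < t" "t \<le> 1" unfolding t_def using ba by auto
  have "t * e \<le> t * \<bar>e\<bar>" using t0 by (simp add: mult_left_mono)
  also have "\<dots> \<le> (b - a) / (2 * (\<bar>e\<bar> + 1)) * \<bar>e\<bar>"
    by (rule mult_right_mono) (auto simp: t_def)
  also have "\<dots> < b - a"
  proof -
    have "(b - a) / (2 * (\<bar>e\<bar> + 1)) * \<bar>e\<bar> = (b - a) * (\<bar>e\<bar> / (2 * (\<bar>e\<bar> + 1)))" by simp
    also have "\<dots> < (b - a) * 1"
      by (rule mult_strict_left_mono) (use ba in \<open>auto simp: divide_less_eq\<close>)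
    finally show ?thesis by simp
  qed
  finally show False using assms[OF t0] by simp
qed

lemma sum_split_nat: "(\<Sum>i=1..a+b. F i) = (\<Sum>i=1..a. F i) + (\<Sum>j=1..b. F (a + j))"
  for F :: "nat \<Rightarrow> 'a::comm_monoid_add"
  by (induction b) (auto simp: add.assoc)



lemma key_coord:
  fixes \<psi> :: "real \<Rightarrow> real" and nn c G z zt :: real
  assumes cvx: "convex_on UNIV \<psi>" and nn: "0 < nn"
    and opt: "\<And>w. ereal (c * (zt - z)\<^sup>2 + G * (zt - z)) + conj_fun \<psi> zt / ereal nn
               \<le> ereal (c * (w - z)\<^sup>2 + G * (w - z)) + conj_fun \<psi> w / ereal nn"
  defines "y \<equiv> - 2 * c * (zt - z) - G"
  shows "conj_fun \<psi> zt = ereal (zt * (nn * y) - \<psi> (nn * y))"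
proof -
  define P where "P = conj_fun \<psi>"
  define q where "q = (\<lambda>w. c * (w - z)\<^sup>2 + G * (w - z))"
  have opt': "ereal (q zt) + P zt / ereal nn \<le> ereal (q w) + P w / ereal nn" for w
    using opt unfolding P_def q_def by simp
  obtain s0 where s0: "\<And>w. \<psi> 0 + s0 * (w - 0) \<le> \<psi> w"
    using subgrad_exists_real[OF cvx, of 0] by blast
  have Ps0: "P s0 \<le> ereal (- \<psi> 0)" unfolding P_def
    by (rule conj_upper) (use s0 in \<open>smt (verit)\<close>)
  have Plow: "P w \<noteq> -\<infinity>" for w
  proof -
    have "ereal (w * 0 - \<psi> 0) \<le> P w" unfolding P_def by (rule conj_lower)
    then show ?thesis by auto
  qed
  have "P zt \<noteq> \<infinity>"
  proof
    assume "P zt = \<infinity>"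
    then have "ereal (q zt) + P zt / ereal nn = \<infinity>" using nn by simp
    moreover have "ereal (q s0) + P s0 / ereal nn \<noteq> \<infinity>"
      using Ps0 Plow[of s0] nn by (cases "P s0") auto
    ultimately show False using opt'[of s0] by simp
  qed
  then obtain Pz where Pz: "P zt = ereal Pz" using Plow[of zt] by (cases "P zt") auto
  have step4: "Pz + nn * y * (w - zt) \<le> Pw" if Pw: "P w = ereal Pw" for w Pw
  proof -
    have "y * (w - zt) - t * (c * (w - zt)\<^sup>2) \<le> (Pw - Pz) / nn" if t: "0 < t" "t \<le> 1" for t
    proof -
      define wt where "wt = zt + t * (w - zt)"
      have "P wt \<le> ereal ((1 - t) * Pz + t * Pw)" unfolding P_def
      proof (rule conj_upper)
        fix y'
        have a: "zt * y' - \<psi> y' \<le> Pz" using conj_lower[of zt y' \<psi>] Pz unfolding P_def by simp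
        have b: "w * y' - \<psi> y' \<le> Pw" using conj_lower[of w y' \<psi>] Pw unfolding P_def by simp
        have "wt * y' - \<psi> y' = (1 - t) * (zt * y' - \<psi> y') + t * (w * y' - \<psi> y')"
          unfolding wt_def by (simp add: algebra_simps)
        also have "\<dots> \<le> (1 - t) * Pz + t * Pw"
          using a b t by (intro add_mono mult_left_mono) auto
        finally show "wt * y' - \<psi> y' \<le> (1 - t) * Pz + t * Pw" .
      qed
      then have "P wt / ereal nn \<le> ereal ((1 - t) * Pz + t * Pw) / ereal nn"
        using nn by (intro ereal_divide_right_mono) auto
      then have d1: "P wt / ereal nn \<le> ereal (((1 - t) * Pz + t * Pw) / nn)" using nn by simp
      have d2: "ereal (q zt) + ereal (Pz / nn) \<le> ereal (q wt) + P wt / ereal nn"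
        using opt'[of wt] Pz nn by simp
      have "ereal (q zt) + ereal (Pz / nn) \<le> ereal (q wt) + ereal (((1 - t) * Pz + t * Pw) / nn)"
        using order_trans[OF d2 add_left_mono[OF d1]] .
      then have ineq: "q zt + Pz / nn \<le> q wt + ((1 - t) * Pz + t * Pw) / nn" by simp
      have qd: "q wt - q zt = - y * t * (w - zt) + c * t\<^sup>2 * (w - zt)\<^sup>2"
        unfolding q_def wt_def y_def by (simp add: algebra_simps power2_eq_square)
      have "((1 - t) * Pz + t * Pw) / nn = Pz / nn + t * ((Pw - Pz) / nn)"
        by (simp add: algebra_simps add_divide_distrib diff_divide_distrib)
      with ineq qd have "t * (y * (w - zt)) - t * (t * (c * (w - zt)\<^sup>2)) \<le> t * ((Pw - Pz) / nn)"
        by (simp add: algebra_simps power2_eq_square)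
      then have "t * (y * (w - zt) - t * (c * (w - zt)\<^sup>2)) \<le> t * ((Pw - Pz) / nn)"
        by (simp add: algebra_simps)
      then show ?thesis using t by (metis mult_left_le_imp_le)
    qed
    then have "y * (w - zt) \<le> (Pw - Pz) / nn" by (rule limit_arg)
    then have "nn * (y * (w - zt)) \<le> Pw - Pz" using nn by (simp add: le_divide_eq mult.commute)
    then show ?thesis by (simp add: algebra_simps)
  qed
  define x where "x = nn * y"
  obtain s where s: "\<And>w. \<psi> x + s * (w - x) \<le> \<psi> w"
    using subgrad_exists_real[OF cvx, of x] by blast
  have "P s \<le> ereal (s * x - \<psi> x)" unfolding P_def
    by (rule conj_upper) (use s in \<open>smt (verit) mult.commute right_diff_distrib\<close>)
  moreover have "ereal (s * x - \<psi> x) \<le> P s" unfolding P_def by (rule conj_lower)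
  ultimately have Ps: "P s = ereal (s * x - \<psi> x)" by simp
  have "Pz + x * (s - zt) \<le> s * x - \<psi> x" using step4[OF Ps] unfolding x_def by simp
  then have up: "Pz \<le> zt * x - \<psi> x" by (simp add: algebra_simps)
  have "ereal (zt * x - \<psi> x) \<le> P zt" unfolding P_def by (rule conj_lower)
  then have "zt * x - \<psi> x \<le> Pz" using Pz by simp
  with up Pz show ?thesis unfolding P_def x_def by simp
qed



lemma sum_ereal_diff:
  assumes "finite S" "\<forall>i\<in>S. h i \<noteq> -\<infinity>"
  shows "(\<Sum>i\<in>S. ereal (a i) - h i) = ereal (\<Sum>i\<in>S. a i) - sum h S \<and> sum h S \<noteq> -\<infinity>"
  using assms
proof (induction S rule: finite_induct)
  case empty then show ?case by (simp add: zero_ereal_def)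
next
  case (insert x F)
  then have IH: "(\<Sum>i\<in>F. ereal (a i) - h i) = ereal (\<Sum>i\<in>F. a i) - sum h F" "sum h F \<noteq> -\<infinity>"
    and hx: "h x \<noteq> -\<infinity>" by auto
  show ?case using insert(1,2) IH hx
    by (cases "h x"; cases "sum h F") auto
qed

theorem lemma4:
  fixes n p m :: nat
    and A Bm :: "nat \<Rightarrow> real^'t::finite"
    and b :: "nat \<Rightarrow> real"
    and f :: "real^'t \<Rightarrow> real"
    and \<phi> :: "nat \<Rightarrow> real \<Rightarrow> real"
    and g :: "nat \<Rightarrow> real^'t \<Rightarrow> real"
    and \<mu> M :: real
    and Lg :: "nat \<Rightarrow> real"
    and zs us vs zt :: "nat \<Rightarrow> nat \<Rightarrow> real"
    and ik :: "nat \<Rightarrow> nat"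
    and k :: nat
    and u :: "nat \<Rightarrow> real"
  defines "N \<equiv> n + p + m"
  assumes n_pos: "1 \<le> n"
    and mu_pos: "0 < \<mu>"
    and f_sc: "strongly_convex \<mu> f"
    and phi_cvx: "\<forall>i\<in>{1..n}. convex_on UNIV (\<phi> i)"
    and phi_lip: "\<forall>i\<in>{1..n}. M-lipschitz_on UNIV (\<phi> i)"
    and g_cvx: "\<forall>i\<in>{1..m}. convex_on UNIV (g i)"
    and g_subgrad: "\<forall>i\<in>{1..m}. \<forall>x s. is_subgrad (g i) x s \<longrightarrow> norm s \<le> Lg i"
    and slater: "\<exists>xb. (\<forall>i\<in>{1..m}. g i xb < 0) \<and> (\<forall>j\<in>{1..p}. inner (Bm j) xb + b j = 0)"
    and opt_finite: "bdd_below {f x + (\<Sum>i=1..n. \<phi> i (inner (A i) x)) / real n | x.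
                        (\<forall>j\<in>{1..p}. inner (Bm j) x + b j = 0) \<and> (\<forall>i\<in>{1..m}. g i x \<le> 0)}"
    and init: "zs 0 \<in> dual_dom n p m" "us 0 = zs 0"
    and v_def: "\<forall>k. vs k = (\<lambda>i. ardca_theta N k * zs k i + (1 - ardca_theta N k) * us k i)"
    and zt_min: "\<forall>k. \<forall>i\<in>{1..N}. \<forall>w.
        ereal (real N * ardca_theta N k * Lconst n p \<mu> A Bm Lg i * (zt k i - zs k i)\<^sup>2
               + grad_d n p m A Bm b f g (vs k) i * (zt k i - zs k i)) + hfun n p \<phi> i (zt k i)
        \<le> ereal (real N * ardca_theta N k * Lconst n p \<mu> A Bm Lg i * (w - zs k i)\<^sup>2
               + grad_d n p m A Bm b f g (vs k) i * (w - zs k i)) + hfun n p \<phi> i w"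
    and ik_range: "\<forall>k. ik k \<in> {1..N}"
    and z_upd: "\<forall>k. zs (Suc k) = (zs k)(ik k := zt k (ik k))"
    and u_upd: "\<forall>k. us (Suc k) = (\<lambda>i. vs k i + real N * ardca_theta N k * (zs (Suc k) i - zs k i))"
    and u_dom: "u \<in> dual_dom n p m"
  shows
    "let y = (\<lambda>i. - 2 * real N * ardca_theta N k * Lconst n p \<mu> A Bm Lg i * (zt k i - zs k i)
                   - grad_d n p m A Bm b f g (vs k) i);
         \<sigma>1 = (\<lambda>i. hfun n p \<phi> i (zt k i) + ereal (y i * (u i - zt k i)) - hfun n p \<phi> i (u i));
         \<sigma>2 = dual_d n p m A Bm b f g (vs k)
              + (\<Sum>i=1..N. grad_d n p m A Bm b f g (vs k) i * (u i - vs k i))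
              - dual_d n p m A Bm b f g u;
         xs = xstar n p m A Bm b f g (vs k)
     in - (\<Sum>i=1..n. \<sigma>1 i) - ereal \<sigma>2
        = ereal (tri_inner n p m A Bm b g xs (\<lambda>i. real n * y i) u)
          + dual_D n p m A Bm b f \<phi> g u + ereal (f xs)
          + ereal ((\<Sum>i=1..n. \<phi> i (real n * y i)) / real n)"
  proof -
  define y where "y = (\<lambda>i. - 2 * real N * ardca_theta N k * Lconst n p \<mu> A Bm Lg i * (zt k i - zs k i)
                   - grad_d n p m A Bm b f g (vs k) i)"
  define xs where "xs = xstar n p m A Bm b f g (vs k)"
  define H where "H = (\<Sum>i=1..n. hfun n p \<phi> i (u i))"
  define cs where "cs = (\<lambda>w. \<Sum>i=1..N. cmap n p A Bm b g xs i * w i)"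
  have nN: "n \<le> N" unfolding N_def by simp
  have npos: "0 < real n" using n_pos by simp
  have hz: "hfun n p \<phi> i (zt k i) = ereal (zt k i * y i - \<phi> i (real n * y i) / real n)"
    if i: "i \<in> {1..n}" for i
  proof -
    have iN: "i \<in> {1..N}" using i nN by auto
    have hf: "\<And>w. hfun n p \<phi> i w = conj_fun (\<phi> i) w / ereal (real n)"
      using i unfolding hfun_def by simp
    define c where "c = real N * ardca_theta N k * Lconst n p \<mu> A Bm Lg i"
    define G where "G = grad_d n p m A Bm b f g (vs k) i"
    have yi: "y i = - 2 * c * (zt k i - zs k i) - G" unfolding y_def c_def G_def by simp
    have "conj_fun (\<phi> i) (zt k i) = ereal (zt k i * (real n * (- 2 * c * (zt k i - zs k i) - G))
         - \<phi> i (real n * (- 2 * c * (zt k i - zs k i) - G)))"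
    proof (rule key_coord[where z = "zs k i"])
      show "convex_on UNIV (\<phi> i)" using phi_cvx i by auto
      show "0 < real n" by (rule npos)
      fix w
      show "ereal (c * (zt k i - zs k i)\<^sup>2 + G * (zt k i - zs k i)) + conj_fun (\<phi> i) (zt k i) / ereal (real n)
          \<le> ereal (c * (w - zs k i)\<^sup>2 + G * (w - zs k i)) + conj_fun (\<phi> i) w / ereal (real n)"
        using zt_min[rule_format, of i k w, OF iN] unfolding c_def G_def by (simp only: hf)
    qed
    then have "conj_fun (\<phi> i) (zt k i) = ereal (zt k i * (real n * y i) - \<phi> i (real n * y i))"
      unfolding yi .
    then show ?thesis using hf npos by (simp add: field_simps)
  qed
  have hu_ninf: "hfun n p \<phi> i (u i) \<noteq> -\<infinity>" if i: "i \<in> {1..n}" for i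
  proof -
    have "ereal (u i * 0 - \<phi> i 0) \<le> conj_fun (\<phi> i) (u i)" by (rule conj_lower)
    then have "conj_fun (\<phi> i) (u i) \<noteq> -\<infinity>" by auto
    then show ?thesis using i npos unfolding hfun_def
      by (cases "conj_fun (\<phi> i) (u i)") auto
  qed
  have hu_zero: "hfun n p \<phi> (n + j) (u (n + j)) = 0" if j: "j \<in> {1..p+m}" for j
  proof (cases "j \<le> p")
    case True then show ?thesis using j unfolding hfun_def by simp
  next
    case False
    then have "0 \<le> u (n + j)" using u_dom j unfolding dual_dom_def by auto
    then show ?thesis using False j unfolding hfun_def by simp
  qed
  have HD: "dual_D n p m A Bm b f \<phi> g u = ereal (dual_d n p m A Bm b f g u) + H"
  proof -
    have "(\<Sum>i=1..N. hfun n p \<phi> i (u i)) = H + (\<Sum>j=1..p+m. hfun n p \<phi> (n + j) (u (n + j)))"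
      unfolding N_def H_def using sum_split_nat[of _ n "p+m"] by (simp add: add.assoc)
    also have "\<dots> = H" using hu_zero by simp
    finally show ?thesis unfolding dual_D_def N_def by simp
  qed
  have s1: "(\<Sum>i=1..n. hfun n p \<phi> i (zt k i) + ereal (y i * (u i - zt k i)) - hfun n p \<phi> i (u i))
      = (\<Sum>i=1..n. ereal (y i * u i - \<phi> i (real n * y i) / real n) - hfun n p \<phi> i (u i))"
    by (rule sum.cong) (auto simp: hz algebra_simps)
  have s1': "\<dots> = ereal (\<Sum>i=1..n. y i * u i - \<phi> i (real n * y i) / real n) - H \<and> H \<noteq> -\<infinity>"
    unfolding H_def by (rule sum_ereal_diff) (use hu_ninf in auto)
  have cs_split: "cs w = (\<Sum>i=1..n. inner (A i) xs / real n * w i)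
      + (\<Sum>j=1..p. (inner (Bm j) xs + b j) * w (n + j))
      + (\<Sum>i=1..m. g i xs * w (n + p + i))" for w
  proof -
    have "cs w = (\<Sum>i=1..n. cmap n p A Bm b g xs i * w i)
      + (\<Sum>j=1..p. cmap n p A Bm b g xs (n + j) * w (n + j))
      + (\<Sum>i=1..m. cmap n p A Bm b g xs (n + p + i) * w (n + p + i))"
      unfolding cs_def N_def
      using sum_split_nat[of "\<lambda>i. cmap n p A Bm b g xs i * w i" "n+p" m]
        sum_split_nat[of "\<lambda>i. cmap n p A Bm b g xs i * w i" n p]
      by (simp add: add.assoc)
    moreover have "(\<Sum>i=1..n. cmap n p A Bm b g xs i * w i) = (\<Sum>i=1..n. inner (A i) xs / real n * w i)"
      by (rule sum.cong) (auto simp: cmap_def)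
    moreover have "(\<Sum>j=1..p. cmap n p A Bm b g xs (n + j) * w (n + j))
        = (\<Sum>j=1..p. (inner (Bm j) xs + b j) * w (n + j))"
      by (rule sum.cong) (auto simp: cmap_def)
    moreover have "(\<Sum>i=1..m. cmap n p A Bm b g xs (n + p + i) * w (n + p + i))
        = (\<Sum>i=1..m. g i xs * w (n + p + i))"
      by (rule sum.cong) (auto simp: cmap_def)
    ultimately show ?thesis by simp
  qed
  have dv: "dual_d n p m A Bm b f g (vs k) = - (f xs + cs (vs k))"
    unfolding dual_d_def xs_def[symmetric] lagr_def cs_split by (simp add: mult.commute)
  have sg: "(\<Sum>i=1..N. grad_d n p m A Bm b f g (vs k) i * (u i - vs k i)) = cs (vs k) - cs u"
    unfolding grad_d_def xs_def[symmetric] cs_def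
    by (simp add: sum_subtractf[symmetric] algebra_simps)
  have ti: "tri_inner n p m A Bm b g xs (\<lambda>i. real n * y i) u = cs u - (\<Sum>i=1..n. y i * u i)"
  proof -
    have "(\<Sum>i=1..n. (inner (A i) xs - real n * y i) / real n * u i)
        = (\<Sum>i=1..n. inner (A i) xs / real n * u i) - (\<Sum>i=1..n. y i * u i)"
      unfolding sum_subtractf[symmetric] using npos by (intro sum.cong) (auto simp: field_simps)
    then show ?thesis unfolding tri_inner_def cs_split by simp
  qed
  have real_id: "- (\<Sum>i=1..n. y i * u i - \<phi> i (real n * y i) / real n)
      - (dual_d n p m A Bm b f g (vs k)
              + (\<Sum>i=1..N. grad_d n p m A Bm b f g (vs k) i * (u i - vs k i))
              - dual_d n p m A Bm b f g u)
      = tri_inner n p m A Bm b g xs (\<lambda>i. real n * y i) u + dual_d n p m A Bm b f g u + f xs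
        + (\<Sum>i=1..n. \<phi> i (real n * y i)) / real n"
    unfolding dv sg ti by (simp add: sum_subtractf sum_divide_distrib algebra_simps)
  have fin: "- (\<Sum>i=1..n. hfun n p \<phi> i (zt k i) + ereal (y i * (u i - zt k i)) - hfun n p \<phi> i (u i))
        - ereal (dual_d n p m A Bm b f g (vs k)
              + (\<Sum>i=1..N. grad_d n p m A Bm b f g (vs k) i * (u i - vs k i))
              - dual_d n p m A Bm b f g u)
      = ereal (tri_inner n p m A Bm b g xs (\<lambda>i. real n * y i) u)
          + dual_D n p m A Bm b f \<phi> g u + ereal (f xs)
          + ereal ((\<Sum>i=1..n. \<phi> i (real n * y i)) / real n)"
    unfolding s1 s1'[THEN conjunct1] HD using s1'[THEN conjunct2] real_id[symmetric]
    by (cases H) (auto simp: algebra_simps)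
  then show ?thesis by (simp only: Let_def y_def xs_def)
qed


end
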